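(* Let $\Gamma$ be a Deza graph with parameters $(n,k,k-1,a)$, $k>1$, $\beta=1$. For an $NA$-vertex $x$, the vertex $(x')_b$ is not adjacent to $x$.
   Context: A Deza graph with parameters $(n,k,b,a)$, $a\le b$, is a $k$-regular graph on $n$ vertices in which any two distinct vertices have $a$ or $b$ common neighbours; $\beta$ is the number of vertices $u\ne v$ with exactly $b$ common neighbours with a given vertex $v$. Since $\beta=1$, for each vertex $x$ let $x_b$ denote the unique vertex having $b=k-1$ common neighbours with $x$. A vertex $x$ is an $A$-vertex if $x$ is adjacent to $x_b$, and an $NA$-vertex otherwise. For an $NA$-vertex $x$, $x'$ denotes the unique neighbour of $x$ not adjacent to $x_b$. *)

theory Defs
  imports Main
begin

definition nbrs :: "'a set \<Rightarrow> ('a \<Rightarrow> 'a \<Rightarrow> bool) \<Rightarrow> 'a \<Rightarrow> 'a set" where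
  "nbrs V E v = {w \<in> V. E v w}"

definition common_nbrs :: "'a set \<Rightarrow> ('a \<Rightarrow> 'a \<Rightarrow> bool) \<Rightarrow> 'a \<Rightarrow> 'a \<Rightarrow> nat" where
  "common_nbrs V E u v = card {w \<in> V. E u w \<and> E v w}"

definition deza_graph :: "'a set \<Rightarrow> ('a \<Rightarrow> 'a \<Rightarrow> bool) \<Rightarrow> nat \<Rightarrow> nat \<Rightarrow> nat \<Rightarrow> nat \<Rightarrow> bool" where
  "deza_graph V E n k b a \<longleftrightarrow>
     finite V \<and> card V = n \<and>
     (\<forall>u v. E u v \<longrightarrow> u \<in> V \<and> v \<in> V) \<and>
     (\<forall>u v. E u v \<longrightarrow> E v u) \<and> (\<forall>v. \<not> E v v) \<and>
     (\<forall>v\<in>V. card (nbrs V E v) = k) \<and>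
     a \<le> b \<and>
     (\<forall>u\<in>V. \<forall>v\<in>V. u \<noteq> v \<longrightarrow> common_nbrs V E u v = a \<or> common_nbrs V E u v = b)"

definition beta_num :: "'a set \<Rightarrow> ('a \<Rightarrow> 'a \<Rightarrow> bool) \<Rightarrow> nat \<Rightarrow> 'a \<Rightarrow> nat" where
  "beta_num V E b v = card {u \<in> V. u \<noteq> v \<and> common_nbrs V E u v = b}"

text \<open>x_b: the unique vertex having b common neighbours with x (when beta = 1).\<close>
definition vb :: "'a set \<Rightarrow> ('a \<Rightarrow> 'a \<Rightarrow> bool) \<Rightarrow> nat \<Rightarrow> 'a \<Rightarrow> 'a" where
  "vb V E b x = (THE y. y \<in> V \<and> y \<noteq> x \<and> common_nbrs V E x y = b)"

definition A_vertex :: "'a set \<Rightarrow> ('a \<Rightarrow> 'a \<Rightarrow> bool) \<Rightarrow> nat \<Rightarrow> 'a \<Rightarrow> bool" where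
  "A_vertex V E b x \<longleftrightarrow> x \<in> V \<and> E x (vb V E b x)"

definition NA_vertex :: "'a set \<Rightarrow> ('a \<Rightarrow> 'a \<Rightarrow> bool) \<Rightarrow> nat \<Rightarrow> 'a \<Rightarrow> bool" where
  "NA_vertex V E b x \<longleftrightarrow> x \<in> V \<and> \<not> E x (vb V E b x)"

text \<open>x': the unique neighbour of the NA-vertex x not adjacent to x_b.\<close>
definition vprime :: "'a set \<Rightarrow> ('a \<Rightarrow> 'a \<Rightarrow> bool) \<Rightarrow> nat \<Rightarrow> 'a \<Rightarrow> 'a" where
  "vprime V E b x = (THE y. y \<in> V \<and> E x y \<and> \<not> E y (vb V E b x))"

end

theory Submission
  imports Defs
begin

theorem lemma10:
  fixes V :: "'a set" and E :: "'a \<Rightarrow> 'a \<Rightarrow> bool" and n k a :: nat and x :: 'a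
  assumes "deza_graph V E n k (k - 1) a"
    and "k > 1"
    and "\<forall>v\<in>V. beta_num V E (k - 1) v = 1"
    and "NA_vertex V E (k - 1) x"
  shows "\<not> E (vb V E (k - 1) (vprime V E (k - 1) x)) x"
proof -
  define b where "b = k - 1"
  define N where "N v = {w. E v w}" for v
  have fin: "finite V" and EV: "\<And>u v. E u v \<Longrightarrow> u \<in> V \<and> v \<in> V"
    and sym: "\<And>u v. E u v \<Longrightarrow> E v u" and irr: "\<And>v. \<not> E v v"
    and deg0: "\<And>v. v \<in> V \<Longrightarrow> card (nbrs V E v) = k"
    using assms(1) unfolding deza_graph_def by auto
  have dz: "\<And>u v. u \<in> V \<Longrightarrow> v \<in> V \<Longrightarrow> u \<noteq> v \<Longrightarrow> common_nbrs V E u v = a \<or> common_nbrs V E u v = b"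
    using assms(1) unfolding deza_graph_def b_def by blast
  have NV: "N v \<subseteq> V" for v using EV unfolding N_def by auto
  have finN: "finite (N v)" for v using NV fin finite_subset by blast
  have deg: "v \<in> V \<Longrightarrow> card (N v) = k" for v
  proof -
    assume "v \<in> V"
    have "nbrs V E v = N v" unfolding nbrs_def N_def using EV by auto
    then show ?thesis using deg0[OF \<open>v \<in> V\<close>] by simp
  qed
  have cn: "common_nbrs V E u v = card (N u \<inter> N v)" for u v
  proof -
    have "{w \<in> V. E u w \<and> E v w} = N u \<inter> N v" unfolding N_def using EV by auto
    then show ?thesis unfolding common_nbrs_def by simp
  qed
  have vbp: "vb V E b v \<in> V \<and> vb V E b v \<noteq> v \<and> card (N v \<inter> N (vb V E b v)) = b \<and>
      (\<forall>u\<in>V. u \<noteq> v \<and> card (N v \<inter> N u) = b \<longrightarrow> u = vb V E b v)" if vV: "v \<in> V" for v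
  proof -
    have "card {u \<in> V. u \<noteq> v \<and> common_nbrs V E u v = b} = 1"
      using assms(3) vV unfolding beta_num_def b_def by auto
    then obtain s where S: "{u \<in> V. u \<noteq> v \<and> common_nbrs V E u v = b} = {s}"
      by (meson card_1_singletonE)
    have sIn: "s \<in> {u \<in> V. u \<noteq> v \<and> common_nbrs V E u v = b}" using S by simp
    have cvs: "card (N v \<inter> N s) = card (N s \<inter> N v)" by (rule arg_cong[where f=card]) blast
    have sp: "s \<in> V" "s \<noteq> v" "card (N v \<inter> N s) = b"
      using sIn cvs cn[of s v] by simp_all
    have su: "\<forall>u\<in>V. u \<noteq> v \<and> card (N v \<inter> N u) = b \<longrightarrow> u = s"
    proof (intro ballI impI)
      fix u assume "u \<in> V" "u \<noteq> v \<and> card (N v \<inter> N u) = b"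
      moreover have "card (N v \<inter> N u) = card (N u \<inter> N v)" by (rule arg_cong[where f=card]) blast
      ultimately have "u \<in> {u \<in> V. u \<noteq> v \<and> common_nbrs V E u v = b}"
        using cn[of u v] by simp
      then show "u = s" using S by blast
    qed
    have vbs: "vb V E b v = s" unfolding vb_def
    proof (rule the_equality)
      show "s \<in> V \<and> s \<noteq> v \<and> common_nbrs V E v s = b" using sp cn by auto
    next
      fix y assume "y \<in> V \<and> y \<noteq> v \<and> common_nbrs V E v y = b"
      then show "y = s" using su cn by auto
    qed
    show ?thesis unfolding vbs by (intro conjI sp su)
  qed
  have xV: "x \<in> V" and nxy: "\<not> E x (vb V E b x)"
    using assms(4) unfolding NA_vertex_def b_def by auto
  define y where "y = vb V E b x"
  have yV: "y \<in> V" and yx: "y \<noteq> x" and Cxy: "card (N x \<inter> N y) = b"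
    and yu: "\<And>u. u \<in> V \<Longrightarrow> u \<noteq> x \<Longrightarrow> card (N x \<inter> N u) = b \<Longrightarrow> u = y"
    using vbp[OF xV] unfolding y_def by auto
  have nxy': "\<not> E x y" using nxy y_def by simp
  have "card (N x - N y) = 1"
    using card_Diff_subset_Int[of "N x" "N y"] finN deg[OF xV] Cxy assms(2) b_def by simp
  then obtain x' where X: "N x - N y = {x'}" by (meson card_1_singletonE)
  have "card (N y - N x) = 1"
    using card_Diff_subset_Int[of "N y" "N x"] finN deg[OF yV] Cxy assms(2) b_def
    by (simp add: Int_commute)
  then obtain y' where Y: "N y - N x = {y'}" by (meson card_1_singletonE)
  have Exx': "E x x'" and nx'y: "\<not> E y x'" using X unfolding N_def by auto
  have Eyy': "E y y'" and ny'x: "\<not> E x y'" using Y unfolding N_def by auto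
  have vp: "vprime V E b x = x'" unfolding vprime_def
  proof (rule the_equality)
    show "x' \<in> V \<and> E x x' \<and> \<not> E x' (vb V E b x)"
      using Exx' EV nx'y sym y_def by blast
  next
    fix w assume "w \<in> V \<and> E x w \<and> \<not> E w (vb V E b x)"
    then have "w \<in> N x - N y" using sym unfolding N_def y_def by blast
    then show "w = x'" using X by auto
  qed
  have Nx: "N x = (N x \<inter> N y) \<union> {x'}" using X by auto
  have Ny: "N y = (N x \<inter> N y) \<union> {y'}" using Y by auto
  have x'C: "x' \<notin> N x \<inter> N y" and y'C: "y' \<notin> N x \<inter> N y" using X Y by auto
  have vby: "vb V E b y = x"
  proof -
    have "card (N y \<inter> N x) = b" using Cxy by (simp add: Int_commute)
    then show ?thesis using vbp[OF yV] xV yx by auto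
  qed
  have key: "E v x' \<longleftrightarrow> E v y'" if vV: "v \<in> V" and vx: "v \<noteq> x" and vy: "v \<noteq> y" for v
  proof -
    have c1: "card (N x \<inter> N v) \<noteq> b" using yu vV vx vy by blast
    have c2: "card (N y \<inter> N v) \<noteq> b" using vbp[OF yV] vV vy vx vby by auto
    have i1: "card (N v \<inter> N x) = card (N x \<inter> N v)" by (simp add: Int_commute)
    have i2: "card (N v \<inter> N y) = card (N y \<inter> N v)" by (simp add: Int_commute)
    have cvx: "common_nbrs V E v x = a" using dz[OF vV xV vx] c1 i1 cn[of v x] by linarith
    have cvy: "common_nbrs V E v y = a" using dz[OF vV yV vy] c2 i2 cn[of v y] by linarith
    let ?C = "N x \<inter> N y"
    have e1: "N v \<inter> N x = (N v \<inter> ?C) \<union> (N v \<inter> {x'})" using Nx by blast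
    have e2: "N v \<inter> N y = (N v \<inter> ?C) \<union> (N v \<inter> {y'})" using Ny by blast
    have k1: "card (N v \<inter> N x) = card (N v \<inter> ?C) + card (N v \<inter> {x'})"
      unfolding e1 by (rule card_Un_disjoint) (use finN x'C in auto)
    have k2: "card (N v \<inter> N y) = card (N v \<inter> ?C) + card (N v \<inter> {y'})"
      unfolding e2 by (rule card_Un_disjoint) (use finN y'C in auto)
    have "card (N v \<inter> {x'}) = card (N v \<inter> {y'})" using k1 k2 cvx cvy cn by simp
    then show ?thesis unfolding N_def
      by (cases "E v x'"; cases "E v y'") auto
  qed
  have x'V: "x' \<in> V" using Exx' EV by blast
  have eq: "N x' \<inter> N y' = N x' - {x}"
  proof
    show "N x' \<inter> N y' \<subseteq> N x' - {x}" using ny'x sym unfolding N_def by blast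
  next
    show "N x' - {x} \<subseteq> N x' \<inter> N y'"
    proof
      fix w assume w: "w \<in> N x' - {x}"
      then have "E x' w" "w \<noteq> x" unfolding N_def by auto
      moreover have "w \<noteq> y" using nx'y sym \<open>E x' w\<close> by blast
      moreover have "w \<in> V" using EV \<open>E x' w\<close> by blast
      ultimately have "E w y'" using key sym by blast
      then show "w \<in> N x' \<inter> N y'" using w sym unfolding N_def by blast
    qed
  qed
  have "x \<in> N x'" using sym Exx' unfolding N_def by blast
  then have cd: "card (N x' \<inter> N y') = b" unfolding eq
    using deg[OF x'V] finN b_def by simp
  have y'V: "y' \<in> V" using Eyy' EV by blast
  have "y' \<noteq> x'" using Exx' ny'x by blast
  then have "y' = vb V E b x'" using vbp[OF x'V] y'V cd by blast
  then have "vb V E b (vprime V E b x) = y'" using vp by simp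
  then show ?thesis using ny'x sym b_def by metis
qed

end
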